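(* Let $p$ be a prime, $k \geq 1$, $d = p^k$, and let $\Omega$ be a set with $d$ elements, $S_d = \mathrm{Aut}(\Omega)$. Let $G \subset S_d$ be a primitive solvable subgroup. Then every element $g \in G$ with $g \neq 1_G$ has at most $p^{k-1}$ fixed points on $\Omega$, i.e. $\#\{x \in \Omega : gx = x\} \leq p^{k-1}$.
   Context: A subgroup $G \subset \mathrm{Aut}(\Omega)$ is primitive if it is transitive and the stabilizer $G_x$ of a point $x\in\Omega$ is a maximal subgroup of $G$. *)

theory Defs
  imports "HOL-Algebra.Group_Action" "HOL-Algebra.Solvable_Groups" "HOL-Computational_Algebra.Primes"
begin

definition maximal_subgroup :: "'a set \<Rightarrow> ('a, 'b) monoid_scheme \<Rightarrow> bool" where
  "maximal_subgroup M G \<longleftrightarrow>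
     subgroup M G \<and> M \<noteq> carrier G \<and>
     (\<forall>K. subgroup K G \<and> M \<subseteq> K \<longrightarrow> K = M \<or> K = carrier G)"

definition perm_subgroup :: "'a set \<Rightarrow> ('a \<Rightarrow> 'a) set \<Rightarrow> ('a \<Rightarrow> 'a) monoid" where
  "perm_subgroup \<Omega> H = (BijGroup \<Omega>)\<lparr>carrier := H\<rparr>"

definition primitive :: "'a set \<Rightarrow> ('a \<Rightarrow> 'a) set \<Rightarrow> bool" where
  "primitive \<Omega> H \<longleftrightarrow>
     subgroup H (BijGroup \<Omega>) \<and>
     (\<forall>x\<in>\<Omega>. \<forall>y\<in>\<Omega>. \<exists>g\<in>H. g x = y) \<and>
     (\<forall>x\<in>\<Omega>. maximal_subgroup (stabilizer (perm_subgroup \<Omega> H) (\<lambda>g. g) x) (perm_subgroup \<Omega> H))"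

end

theory Submission
  imports Defs
begin

lemma (in group) solv_abelian_normal:
  assumes "solvable G" and "carrier G \<noteq> {\<one>}"
  shows "\<exists>A. A \<lhd> G \<and> A \<noteq> {\<one>} \<and> (\<forall>a\<in>A. \<forall>b\<in>A. a \<otimes> b = b \<otimes> a)"
proof -
  define D where "D i = (derived G ^^ i) (carrier G)" for i
  have nD: "D i \<lhd> G" for i
    proof (induction i)
    case 0 then show ?case unfolding D_def by (simp add: normal_self)
  next
    case (Suc i) then show ?case unfolding D_def by (simp add: derived_is_normal)
  qed
  obtain n where n: "D n = {\<one>}"
    using assms(1) solvable_iff_trivial_derived_seq D_def by auto
  define m where "m = (LEAST n. D n = {\<one>})"
  have m: "D m = {\<one>}" unfolding m_def by (rule LeastI[of _ n], rule n)
  have D0: "D 0 \<noteq> {\<one>}" using assms(2) unfolding D_def by simp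
  have "m \<noteq> 0" using m D0 by metis
  then obtain j where j: "m = Suc j" using not0_implies_Suc by blast
  have Dj: "D j \<noteq> {\<one>}" using not_less_Least[of j "\<lambda>n. D n = {\<one>}"] j m_def by auto
  have dj: "derived G (D j) = {\<one>}" using m j by (simp add: D_def)
  have sub: "D j \<subseteq> carrier G" using nD normal_imp_subgroup subgroup.subset by blast
  have comm: "a \<otimes> b = b \<otimes> a" if a: "a \<in> D j" and b: "b \<in> D j" for a b
  proof -
    have ac: "a \<in> carrier G" and bc: "b \<in> carrier G" using a b sub by auto
    have "a \<otimes> b \<otimes> inv a \<otimes> inv b \<in> derived G (D j)"
      unfolding derived_def using a b by (blast intro: generate.incl)
    then have e: "a \<otimes> b \<otimes> inv a \<otimes> inv b = \<one>" using dj by auto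
    have c1: "inv b \<otimes> (b \<otimes> a) = a" using ac bc by (simp add: m_assoc[symmetric])
    have "a \<otimes> b \<otimes> inv a \<otimes> inv b \<otimes> (b \<otimes> a) = b \<otimes> a" using e ac bc by simp
    moreover have "a \<otimes> b \<otimes> inv a \<otimes> inv b \<otimes> (b \<otimes> a) = a \<otimes> b"
      using ac bc c1 by (simp add: m_assoc)
    ultimately show ?thesis by simp
  qed
  show ?thesis using nD[of j] Dj comm by blast
qed

lemma ps_carrier: "carrier (perm_subgroup \<Omega> H) = H"
  by (simp add: perm_subgroup_def)

lemma ps_one: "\<one>\<^bsub>perm_subgroup \<Omega> H\<^esub> = \<one>\<^bsub>BijGroup \<Omega>\<^esub>"
  by (simp add: perm_subgroup_def)

lemma ps_group: "subgroup H (BijGroup \<Omega>) \<Longrightarrow> group (perm_subgroup \<Omega> H)"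
  unfolding perm_subgroup_def by (rule subgroup.subgroup_is_group[OF _ group_BijGroup])

lemma ps_Bij: "subgroup H (BijGroup \<Omega>) \<Longrightarrow> f \<in> H \<Longrightarrow> f \<in> Bij \<Omega>"
  using subgroup.subset by (fastforce simp: BijGroup_def)

lemma ps_app_mult:
  assumes "subgroup H (BijGroup \<Omega>)" "f \<in> H" "h \<in> H" "x \<in> \<Omega>"
  shows "(f \<otimes>\<^bsub>perm_subgroup \<Omega> H\<^esub> h) x = f (h x)"
  using ps_Bij[OF assms(1,2)] ps_Bij[OF assms(1,3)] assms(4)
  by (simp add: perm_subgroup_def BijGroup_def compose_def)

lemma ps_app_one: "x \<in> \<Omega> \<Longrightarrow> \<one>\<^bsub>perm_subgroup \<Omega> H\<^esub> x = x"
  by (simp add: perm_subgroup_def BijGroup_def)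

lemma ps_closed: "subgroup H (BijGroup \<Omega>) \<Longrightarrow> f \<in> H \<Longrightarrow> x \<in> \<Omega> \<Longrightarrow> f x \<in> \<Omega>"
  using ps_Bij Bij_imp_funcset by fastforce

lemma ps_ext:
  assumes "subgroup H (BijGroup \<Omega>)" "f \<in> H" "\<And>x. x \<in> \<Omega> \<Longrightarrow> f x = x"
  shows "f = \<one>\<^bsub>perm_subgroup \<Omega> H\<^esub>"
proof -
  have "f \<in> extensional \<Omega>" using ps_Bij[OF assms(1,2)] Bij_imp_extensional by blast
  then show ?thesis using assms(3)
    by (auto simp: perm_subgroup_def BijGroup_def intro!: extensionalityI[of _ \<Omega>])
qed

theorem proposition2p2:
  fixes p k :: nat and \<Omega> :: "'a set" and H :: "('a \<Rightarrow> 'a) set" and g :: "'a \<Rightarrow> 'a"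
  assumes "prime p" and "k \<ge> 1"
    and "finite \<Omega>" and "card \<Omega> = p ^ k"
    and "subgroup H (BijGroup \<Omega>)"
    and "primitive \<Omega> H"
    and "solvable (perm_subgroup \<Omega> H)"
    and "g \<in> H" and "g \<noteq> \<one>\<^bsub>BijGroup \<Omega>\<^esub>"
  shows "card {x \<in> \<Omega>. g x = x} \<le> p ^ (k - 1)"
proof -
  interpret G: group "(perm_subgroup \<Omega> H)" using ps_group[OF assms(5)] .
  have cG: "carrier (perm_subgroup \<Omega> H) = H" by (rule ps_carrier)
  have HC: "x \<in> carrier (perm_subgroup \<Omega> H)" if "x \<in> H" for x using that cG by simp
  have Hm: "a \<otimes>\<^bsub>(perm_subgroup \<Omega> H)\<^esub> b \<in> H" if "a \<in> H" "b \<in> H" for a b using that G.m_closed cG by auto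
  have Hi: "(inv\<^bsub>(perm_subgroup \<Omega> H)\<^esub> a) \<in> H" if "a \<in> H" for a using that G.inv_closed cG by auto
  have H1: "\<one>\<^bsub>(perm_subgroup \<Omega> H)\<^esub> \<in> H" using G.one_closed cG by auto
  have mul: "(f \<otimes>\<^bsub>(perm_subgroup \<Omega> H)\<^esub> h) x = f (h x)" if "f \<in> H" "h \<in> H" "x \<in> \<Omega>" for f h x
    using ps_app_mult[OF assms(5) that] .
  have cl: "f x \<in> \<Omega>" if "f \<in> H" "x \<in> \<Omega>" for f x using ps_closed[OF assms(5) that] .
  have one_app: "\<one>\<^bsub>(perm_subgroup \<Omega> H)\<^esub> x = x" if "x \<in> \<Omega>" for x using ps_app_one[OF that] .
  have ext: "f = \<one>\<^bsub>(perm_subgroup \<Omega> H)\<^esub>" if "f \<in> H" "\<And>x. x \<in> \<Omega> \<Longrightarrow> f x = x" for f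
    using ps_ext[OF assms(5) that] .
  have invapp: "(inv\<^bsub>(perm_subgroup \<Omega> H)\<^esub> f) (f x) = x" if "f \<in> H" "x \<in> \<Omega>" for f x
  proof -
    have "(inv\<^bsub>(perm_subgroup \<Omega> H)\<^esub> f) (f x) = ((inv\<^bsub>(perm_subgroup \<Omega> H)\<^esub> f) \<otimes>\<^bsub>(perm_subgroup \<Omega> H)\<^esub> f) x" using mul[of "(inv\<^bsub>(perm_subgroup \<Omega> H)\<^esub> f)" f x] that Hi by simp
    also have "\<dots> = x" using that cG one_app by simp
    finally show ?thesis .
  qed
  have invapp2: "f ((inv\<^bsub>(perm_subgroup \<Omega> H)\<^esub> f) x) = x" if "f \<in> H" "x \<in> \<Omega>" for f x
  proof -
    have "f ((inv\<^bsub>(perm_subgroup \<Omega> H)\<^esub> f) x) = (f \<otimes>\<^bsub>(perm_subgroup \<Omega> H)\<^esub> (inv\<^bsub>(perm_subgroup \<Omega> H)\<^esub> f)) x" using mul[of f "(inv\<^bsub>(perm_subgroup \<Omega> H)\<^esub> f)" x] that Hi by simp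
    also have "\<dots> = x" using that cG one_app by simp
    finally show ?thesis .
  qed
  have Hne1: "carrier (perm_subgroup \<Omega> H) \<noteq> {\<one>\<^bsub>(perm_subgroup \<Omega> H)\<^esub>}" using assms(8,9) ps_one[of \<Omega> H] cG by auto
  obtain A where nA: "A \<lhd> (perm_subgroup \<Omega> H)" and A1: "A \<noteq> {\<one>\<^bsub>(perm_subgroup \<Omega> H)\<^esub>}"
      and Acomm: "\<forall>a\<in>A. \<forall>b\<in>A. a \<otimes>\<^bsub>(perm_subgroup \<Omega> H)\<^esub> b = b \<otimes>\<^bsub>(perm_subgroup \<Omega> H)\<^esub> a"
    using G.solv_abelian_normal[OF assms(7) Hne1] by blast
  interpret A: normal A "(perm_subgroup \<Omega> H)" by (rule nA)
  have sA: "subgroup A (perm_subgroup \<Omega> H)" using nA normal_imp_subgroup by blast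
  have AH: "A \<subseteq> H" using A.subset cG by auto
  have A1': "\<one>\<^bsub>(perm_subgroup \<Omega> H)\<^esub> \<in> A" by (rule A.one_closed)
  have Am: "a \<otimes>\<^bsub>(perm_subgroup \<Omega> H)\<^esub> b \<in> A" if "a \<in> A" "b \<in> A" for a b using that A.m_closed by auto
  have Ai: "(inv\<^bsub>(perm_subgroup \<Omega> H)\<^esub> a) \<in> A" if "a \<in> A" for a using that A.m_inv_closed by auto
  have conj1: "(inv\<^bsub>(perm_subgroup \<Omega> H)\<^esub> h) \<otimes>\<^bsub>(perm_subgroup \<Omega> H)\<^esub> a \<otimes>\<^bsub>(perm_subgroup \<Omega> H)\<^esub> h \<in> A" if "h \<in> H" "a \<in> A" for h a
    using A.inv_op_closed1 that cG by auto
  have conj2: "h \<otimes>\<^bsub>(perm_subgroup \<Omega> H)\<^esub> a \<otimes>\<^bsub>(perm_subgroup \<Omega> H)\<^esub> (inv\<^bsub>(perm_subgroup \<Omega> H)\<^esub> h) \<in> A" if "h \<in> H" "a \<in> A" for h a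
    using A.inv_op_closed2 that cG by auto
  have trans: "\<forall>x\<in>\<Omega>. \<forall>y\<in>\<Omega>. \<exists>h\<in>H. h x = y"
    and maxi: "\<forall>x\<in>\<Omega>. maximal_subgroup (stabilizer (perm_subgroup \<Omega> H) (\<lambda>g. g) x) (perm_subgroup \<Omega> H)"
    using assms(6) unfolding primitive_def by auto
  show ?thesis
  proof (cases "{x \<in> \<Omega>. g x = x} = {}")
    case True then show ?thesis by (simp only: card.empty)
  next
    case False
    then obtain x0 where x0: "x0 \<in> \<Omega>" "g x0 = x0" by auto
    define K where "K = {h \<in> H. \<exists>a\<in>A. h x0 = a x0}"
    have subK: "subgroup K (perm_subgroup \<Omega> H)"
    proof (rule G.subgroupI)
      show "K \<subseteq> carrier (perm_subgroup \<Omega> H)" using cG K_def by auto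
      show "K \<noteq> {}" using H1 A1' unfolding K_def by blast
    next
      fix h assume "h \<in> K"
      then obtain a where h: "h \<in> H" "a \<in> A" "h x0 = a x0" unfolding K_def by auto
      have aH: "a \<in> H" using h AH by auto
      have "(inv\<^bsub>(perm_subgroup \<Omega> H)\<^esub> h) x0 = (inv\<^bsub>(perm_subgroup \<Omega> H)\<^esub> h) ((inv\<^bsub>(perm_subgroup \<Omega> H)\<^esub> a) (a x0))" using invapp aH x0 by simp
      also have "\<dots> = (inv\<^bsub>(perm_subgroup \<Omega> H)\<^esub> h) ((inv\<^bsub>(perm_subgroup \<Omega> H)\<^esub> a) (h x0))" using h by simp
      also have "\<dots> = ((inv\<^bsub>(perm_subgroup \<Omega> H)\<^esub> h) \<otimes>\<^bsub>(perm_subgroup \<Omega> H)\<^esub> (inv\<^bsub>(perm_subgroup \<Omega> H)\<^esub> a) \<otimes>\<^bsub>(perm_subgroup \<Omega> H)\<^esub> h) x0"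
        using mul Hi Hm h aH x0 cl by simp
      finally show "(inv\<^bsub>(perm_subgroup \<Omega> H)\<^esub> h) \<in> K" unfolding K_def using Hi h conj1[OF h(1) Ai[OF h(2)]] by blast
    next
      fix h1 h2 assume "h1 \<in> K" "h2 \<in> K"
      then obtain a1 a2 where h: "h1 \<in> H" "a1 \<in> A" "h1 x0 = a1 x0" "h2 \<in> H" "a2 \<in> A" "h2 x0 = a2 x0"
        unfolding K_def by auto
      have aH: "a1 \<in> H" "a2 \<in> H" using h AH by auto
      define c where "c = h1 \<otimes>\<^bsub>(perm_subgroup \<Omega> H)\<^esub> a2 \<otimes>\<^bsub>(perm_subgroup \<Omega> H)\<^esub> (inv\<^bsub>(perm_subgroup \<Omega> H)\<^esub> h1)"
      have cA: "c \<in> A" unfolding c_def using conj2 h by auto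
      have cH: "c \<in> H" using cA AH by auto
      have "(h1 \<otimes>\<^bsub>(perm_subgroup \<Omega> H)\<^esub> h2) x0 = h1 (a2 x0)" using mul h x0 by simp
      also have "\<dots> = h1 (a2 ((inv\<^bsub>(perm_subgroup \<Omega> H)\<^esub> h1) (h1 x0)))" by (simp only: invapp[OF h(1) x0(1)])
      also have "\<dots> = c (h1 x0)" unfolding c_def using mul Hi Hm h aH x0 cl by simp
      also have "\<dots> = (c \<otimes>\<^bsub>(perm_subgroup \<Omega> H)\<^esub> a1) x0" using h mul cH aH x0 by simp
      finally show "h1 \<otimes>\<^bsub>(perm_subgroup \<Omega> H)\<^esub> h2 \<in> K" unfolding K_def using Hm h Am[OF cA h(2)] by blast
    qed
    define S where "S = stabilizer (perm_subgroup \<Omega> H) (\<lambda>g. g) x0"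
    have S_eq: "S = {h \<in> H. h x0 = x0}" unfolding S_def stabilizer_def cG by simp
    have SK: "S \<subseteq> K"
    proof
      fix h assume "h \<in> S"
      then have "h \<in> H" "h x0 = \<one>\<^bsub>(perm_subgroup \<Omega> H)\<^esub> x0" using S_eq one_app[OF x0(1)] by auto
      then show "h \<in> K" unfolding K_def using A1' by blast
    qed
    have KS: "K = S \<or> K = carrier (perm_subgroup \<Omega> H)"
      using maxi x0 subK SK unfolding maximal_subgroup_def S_def by blast
    have transA: "\<forall>y\<in>\<Omega>. \<exists>a\<in>A. a x0 = y"
    proof (cases "K = S")
      case True
      have "A \<subseteq> {\<one>\<^bsub>(perm_subgroup \<Omega> H)\<^esub>}"
      proof
        fix a assume aA: "a \<in> A"
        have aH: "a \<in> H" using aA AH by auto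
        have fixS: "b x0 = x0" if "b \<in> A" for b
        proof -
          have "b \<in> K" unfolding K_def using that AH by auto
          then show ?thesis using True S_eq by auto
        qed
        have "a y = y" if y: "y \<in> \<Omega>" for y
        proof -
          obtain h where h: "h \<in> H" "h x0 = y" using trans x0 y by blast
          have c: "((inv\<^bsub>(perm_subgroup \<Omega> H)\<^esub> h) \<otimes>\<^bsub>(perm_subgroup \<Omega> H)\<^esub> a \<otimes>\<^bsub>(perm_subgroup \<Omega> H)\<^esub> h) x0 = x0" using fixS conj1 h aA by blast
          have "a y = h ((inv\<^bsub>(perm_subgroup \<Omega> H)\<^esub> h) (a y))" using invapp2[OF h(1) cl[OF aH y]] by simp
          also have "\<dots> = h ((inv\<^bsub>(perm_subgroup \<Omega> H)\<^esub> h) (a (h x0)))" using h(2) by simp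
          also have "\<dots> = h (((inv\<^bsub>(perm_subgroup \<Omega> H)\<^esub> h) \<otimes>\<^bsub>(perm_subgroup \<Omega> H)\<^esub> a \<otimes>\<^bsub>(perm_subgroup \<Omega> H)\<^esub> h) x0)" using mul Hi Hm h(1) aH x0 cl by simp
          also have "\<dots> = y" using c h by simp
          finally show ?thesis .
        qed
        then show "a \<in> {\<one>\<^bsub>(perm_subgroup \<Omega> H)\<^esub>}" using ext aH by auto
      qed
      then show ?thesis using A1 A1' by auto
    next
      case False
      then have "K = H" using KS cG by auto
      show ?thesis
      proof
        fix y assume y: "y \<in> \<Omega>"
        obtain h where h: "h \<in> H" "h x0 = y" using trans x0 y by blast
        then have "h \<in> K" using \<open>K = H\<close> by simp
        then obtain a where "a \<in> A" "h x0 = a x0" unfolding K_def by blast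
        then show "\<exists>a\<in>A. a x0 = y" using h by auto
      qed
    qed
    have reg: "a = \<one>\<^bsub>(perm_subgroup \<Omega> H)\<^esub>" if aA: "a \<in> A" "a x0 = x0" for a
    proof -
      have aH: "a \<in> H" using aA AH by auto
      have "a y = y" if y: "y \<in> \<Omega>" for y
      proof -
        obtain b where b: "b \<in> A" "b x0 = y" using transA y by blast
        have bH: "b \<in> H" using b AH by auto
        have "a y = (a \<otimes>\<^bsub>(perm_subgroup \<Omega> H)\<^esub> b) x0" using mul[OF aH bH x0(1)] b by simp
        also have "\<dots> = (b \<otimes>\<^bsub>(perm_subgroup \<Omega> H)\<^esub> a) x0" using Acomm b aA by auto
        also have "\<dots> = y" using mul[OF bH aH x0(1)] b aA by simp
        finally show ?thesis .
      qed
      then show ?thesis using ext aH by auto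
    qed
    have inj: "inj_on (\<lambda>a. a x0) A"
    proof (rule inj_onI)
      fix a b assume ab: "a \<in> A" "b \<in> A" "a x0 = b x0"
      have aH: "a \<in> H" "b \<in> H" using ab AH by auto
      have "((inv\<^bsub>(perm_subgroup \<Omega> H)\<^esub> b) \<otimes>\<^bsub>(perm_subgroup \<Omega> H)\<^esub> a) x0 = x0" using mul Hi aH x0 ab invapp by simp
      then have e: "(inv\<^bsub>(perm_subgroup \<Omega> H)\<^esub> b) \<otimes>\<^bsub>(perm_subgroup \<Omega> H)\<^esub> a = \<one>\<^bsub>(perm_subgroup \<Omega> H)\<^esub>" using reg Am Ai ab by blast
      have "a = b \<otimes>\<^bsub>(perm_subgroup \<Omega> H)\<^esub> ((inv\<^bsub>(perm_subgroup \<Omega> H)\<^esub> b) \<otimes>\<^bsub>(perm_subgroup \<Omega> H)\<^esub> a)" using aH by (simp add: HC G.m_assoc[symmetric])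
      then show "a = b" using e aH cG by simp
    qed
    have bij: "bij_betw (\<lambda>a. a x0) A \<Omega>"
      unfolding bij_betw_def using inj transA cl AH x0 by fastforce
    have cardA: "card A = p ^ k" using bij_betw_same_card[OF bij] assms(4) by simp
    have finA: "finite A" using bij_betw_finite[OF bij] assms(3) by simp
    define C where "C = {a \<in> A. g \<otimes>\<^bsub>(perm_subgroup \<Omega> H)\<^esub> a = a \<otimes>\<^bsub>(perm_subgroup \<Omega> H)\<^esub> g}"
    have gH: "g \<in> H" by (rule assms(8))
    have subC: "subgroup C (perm_subgroup \<Omega> H)"
    proof (rule G.subgroupI)
      show "C \<subseteq> carrier (perm_subgroup \<Omega> H)" using cG C_def AH by auto
      have "\<one>\<^bsub>(perm_subgroup \<Omega> H)\<^esub> \<in> C" unfolding C_def using A1' HC[OF gH] by simp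
      then show "C \<noteq> {}" by blast
    next
      fix a assume "a \<in> C"
      then have a: "a \<in> A" "g \<otimes>\<^bsub>(perm_subgroup \<Omega> H)\<^esub> a = a \<otimes>\<^bsub>(perm_subgroup \<Omega> H)\<^esub> g" unfolding C_def by auto
      have aH: "a \<in> H" using a AH by auto
      have "(inv\<^bsub>(perm_subgroup \<Omega> H)\<^esub> a) \<otimes>\<^bsub>(perm_subgroup \<Omega> H)\<^esub> g = (inv\<^bsub>(perm_subgroup \<Omega> H)\<^esub> a) \<otimes>\<^bsub>(perm_subgroup \<Omega> H)\<^esub> (g \<otimes>\<^bsub>(perm_subgroup \<Omega> H)\<^esub> a) \<otimes>\<^bsub>(perm_subgroup \<Omega> H)\<^esub> (inv\<^bsub>(perm_subgroup \<Omega> H)\<^esub> a)" using aH gH by (simp add: HC G.m_assoc)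
      also have "\<dots> = g \<otimes>\<^bsub>(perm_subgroup \<Omega> H)\<^esub> (inv\<^bsub>(perm_subgroup \<Omega> H)\<^esub> a)" using a aH gH by (simp add: HC G.m_assoc[symmetric])
      finally show "(inv\<^bsub>(perm_subgroup \<Omega> H)\<^esub> a) \<in> C" unfolding C_def using Ai a by auto
    next
      fix a b assume "a \<in> C" "b \<in> C"
      then have a: "a \<in> A" "g \<otimes>\<^bsub>(perm_subgroup \<Omega> H)\<^esub> a = a \<otimes>\<^bsub>(perm_subgroup \<Omega> H)\<^esub> g" "b \<in> A" "g \<otimes>\<^bsub>(perm_subgroup \<Omega> H)\<^esub> b = b \<otimes>\<^bsub>(perm_subgroup \<Omega> H)\<^esub> g" unfolding C_def by auto
      have aH: "a \<in> H" "b \<in> H" using a AH by auto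
      have "g \<otimes>\<^bsub>(perm_subgroup \<Omega> H)\<^esub> (a \<otimes>\<^bsub>(perm_subgroup \<Omega> H)\<^esub> b) = (g \<otimes>\<^bsub>(perm_subgroup \<Omega> H)\<^esub> a) \<otimes>\<^bsub>(perm_subgroup \<Omega> H)\<^esub> b" using aH gH by (simp add: HC G.m_assoc)
      also have "\<dots> = a \<otimes>\<^bsub>(perm_subgroup \<Omega> H)\<^esub> (g \<otimes>\<^bsub>(perm_subgroup \<Omega> H)\<^esub> b)" using a aH gH by (simp add: HC G.m_assoc)
      also have "\<dots> = (a \<otimes>\<^bsub>(perm_subgroup \<Omega> H)\<^esub> b) \<otimes>\<^bsub>(perm_subgroup \<Omega> H)\<^esub> g" using a aH gH by (simp add: HC G.m_assoc)
      finally show "a \<otimes>\<^bsub>(perm_subgroup \<Omega> H)\<^esub> b \<in> C" unfolding C_def using Am a by auto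
    qed
    have ginv: "(inv\<^bsub>(perm_subgroup \<Omega> H)\<^esub> g) x0 = x0" using invapp[OF gH x0(1)] x0 by simp
    have F_eq: "{x \<in> \<Omega>. g x = x} = (\<lambda>a. a x0) ` C"
    proof
      show "(\<lambda>a. a x0) ` C \<subseteq> {x \<in> \<Omega>. g x = x}"
      proof
        fix y assume "y \<in> (\<lambda>a. a x0) ` C"
        then obtain a where a: "a \<in> A" "g \<otimes>\<^bsub>(perm_subgroup \<Omega> H)\<^esub> a = a \<otimes>\<^bsub>(perm_subgroup \<Omega> H)\<^esub> g" "y = a x0" unfolding C_def by auto
        have aH: "a \<in> H" using a AH by auto
        have "g y = (g \<otimes>\<^bsub>(perm_subgroup \<Omega> H)\<^esub> a) x0" using mul[OF gH aH x0(1)] a(3) by simp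
        also have "\<dots> = (a \<otimes>\<^bsub>(perm_subgroup \<Omega> H)\<^esub> g) x0" using a(2) by simp
        also have "\<dots> = y" using mul[OF aH gH x0(1)] a(3) x0(2) by simp
        finally show "y \<in> {x \<in> \<Omega>. g x = x}" using a cl aH x0 by auto
      qed
    next
      show "{x \<in> \<Omega>. g x = x} \<subseteq> (\<lambda>a. a x0) ` C"
      proof
        fix y assume "y \<in> {x \<in> \<Omega>. g x = x}"
        then have y: "y \<in> \<Omega>" "g y = y" by auto
        obtain a where a: "a \<in> A" "a x0 = y" using transA y by blast
        have aH: "a \<in> H" using a AH by auto
        define c where "c = g \<otimes>\<^bsub>(perm_subgroup \<Omega> H)\<^esub> a \<otimes>\<^bsub>(perm_subgroup \<Omega> H)\<^esub> (inv\<^bsub>(perm_subgroup \<Omega> H)\<^esub> g)"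
        have cA: "c \<in> A" unfolding c_def using conj2 gH a by auto
        have "c x0 = g (a ((inv\<^bsub>(perm_subgroup \<Omega> H)\<^esub> g) x0))" unfolding c_def using mul Hi Hm gH aH x0 cl by simp
        also have "\<dots> = a x0" using ginv a y by simp
        finally have "c = a" using inj cA a unfolding inj_on_def by blast
        then have "g \<otimes>\<^bsub>(perm_subgroup \<Omega> H)\<^esub> a = a \<otimes>\<^bsub>(perm_subgroup \<Omega> H)\<^esub> g" unfolding c_def using gH aH cG
          by (metis G.inv_solve_right' G.m_closed)
        then show "y \<in> (\<lambda>a. a x0) ` C" unfolding C_def using a by auto
      qed
    qed
    have CA: "C \<noteq> A"
    proof
      assume CA: "C = A"
      have "g y = y" if y: "y \<in> \<Omega>" for y
      proof -
        obtain a where a: "a \<in> A" "a x0 = y" using transA y by blast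
        have aH: "a \<in> H" using a AH by auto
        have ga: "g \<otimes>\<^bsub>(perm_subgroup \<Omega> H)\<^esub> a = a \<otimes>\<^bsub>(perm_subgroup \<Omega> H)\<^esub> g" using a CA C_def by auto
        have "g y = (g \<otimes>\<^bsub>(perm_subgroup \<Omega> H)\<^esub> a) x0" using mul[OF gH aH x0(1)] a(2) by simp
        also have "\<dots> = (a \<otimes>\<^bsub>(perm_subgroup \<Omega> H)\<^esub> g) x0" using ga by simp
        also have "\<dots> = y" using mul[OF aH gH x0(1)] a(2) x0(2) by simp
        finally show ?thesis .
      qed
      then have "g = \<one>\<^bsub>(perm_subgroup \<Omega> H)\<^esub>" using ext gH by auto
      then show False using assms(9) ps_one[of \<Omega> H] by metis
    qed
    have CsubA: "C \<subseteq> A" unfolding C_def by auto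
    have finC: "finite C" using finA CsubA finite_subset by blast
    have "subgroup C ((perm_subgroup \<Omega> H)\<lparr>carrier := A\<rparr>)" using G.subgroup_incl[OF subC sA CsubA] .
    moreover have grpA: "group ((perm_subgroup \<Omega> H)\<lparr>carrier := A\<rparr>)" using subgroup.subgroup_is_group[OF sA] G.group_axioms by blast
    ultimately have "card (rcosets\<^bsub>(perm_subgroup \<Omega> H)\<lparr>carrier := A\<rparr>\<^esub> C) * card C = order ((perm_subgroup \<Omega> H)\<lparr>carrier := A\<rparr>)"
      using group.lagrange by blast
    then have "card C dvd card A" unfolding order_def by (metis dvd_triv_right partial_object.select_convs(1) partial_object.surjective partial_object.update_convs(1))
    then obtain i where i: "i \<le> k" "card C = p ^ i" using cardA divides_primepow_nat[OF assms(1)] by auto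
    have "card C < card A" using psubset_card_mono[OF finA] CsubA CA by auto
    then have "i \<noteq> k" using i cardA by auto
    then have "i \<le> k - 1" using i by auto
    moreover have p1: "1 \<le> p" using prime_gt_0_nat[OF assms(1)] by simp
    ultimately have "p ^ i \<le> p ^ (k - 1)" by (rule power_increasing)
    then have "card C \<le> p ^ (k - 1)" using i by simp
    moreover have "card {x \<in> \<Omega>. g x = x} \<le> card C" using F_eq card_image_le[OF finC] by simp
    ultimately show ?thesis by linarith
  qed
qed

end
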